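(* Let $\mathcal{A}$, $\mathcal{E}=\Omega^1(\mathcal{A})$, the splitting $\mathcal{E}\otimes_{\mathcal{A}}\mathcal{E}=\ker(\wedge)\oplus\mathcal{F}$, $\sigma$ and $\nabla_0$ be as in the context, assume $\mathcal{E}$ is centered and $\sigma(\omega\otimes_{\mathcal{A}}\eta)=\eta\otimes_{\mathcal{A}}\omega$ for all $\omega,\eta\in\mathcal{Z}(\mathcal{E})$. Let $g$ be a bilinear pseudo-Riemannian metric on $\mathcal{E}$ and $\nabla$ a torsionless connection on $\mathcal{E}$ which is compatible with $g$ on $\mathcal{Z}(\mathcal{E})$. Write $\nabla(\eta)=\sum_i\eta_{(0)i}\otimes_{\mathcal{A}}\eta_{(1)i}$ and $\nabla_0(\omega)=\sum_i{}_{(0)}\omega_i\otimes_{\mathcal{A}}{}_{(1)}\omega_i$ with $\eta_{(1)i},{}_{(1)}\omega_i\in\mathcal{Z}(\mathcal{E})$, and abbreviate $g(a\otimes_{\mathcal{A}} x_{(0)})g(b\otimes_{\mathcal{A}} x_{(1)}):=\sum_i g(a\otimes_{\mathcal{A}} x_{(0)i})g(b\otimes_{\mathcal{A}} x_{(1)i})$ and similarly for the other products. Then for all $\omega,\eta,\theta\in\mathcal{Z}(\mathcal{E})$, \begin{align*} 2g(\omega\otimes_{\mathcal{A}}\eta_{(0)})g(\theta\otimes_{\mathcal{A}}\eta_{(1)}) &=g(\omega\otimes_{\mathcal{A}}dg(\eta\otimes_{\mathcal{A}}\theta))-g(\eta\otimes_{\mathcal{A}}dg(\theta\otimes_{\mathcal{A}}\omega))+g(\theta\otimes_{\mathcal{A}}dg(\omega\otimes_{\mathcal{A}}\eta))\\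 &\quad-g(\eta\otimes_{\mathcal{A}}{}_{(0)}\omega)g(\theta\otimes_{\mathcal{A}}{}_{(1)}\omega)+g(\eta\otimes_{\mathcal{A}}{}_{(1)}\omega)g(\theta\otimes_{\mathcal{A}}{}_{(0)}\omega)\\ &\quad+g(\omega\otimes_{\mathcal{A}}{}_{(0)}\eta)g(\theta\otimes_{\mathcal{A}}{}_{(1)}\eta)-g(\omega\otimes_{\mathcal{A}}{}_{(1)}\eta)g(\theta\otimes_{\mathcal{A}}{}_{(0)}\eta)\\ &\quad-g(\eta\otimes_{\mathcal{A}}{}_{(0)}\theta)g(\omega\otimes_{\mathcal{A}}{}_{(1)}\theta)+g(\eta\otimes_{\mathcal{A}}{}_{(1)}\theta)g(\omega\otimes_{\mathcal{A}}{}_{(0)}\theta). \end{align*}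
   Context: $\mathcal{A}$ is a complex algebra with a differential calculus $(\Omega(\mathcal{A}),d)$ (graded, $\Omega^0=\mathcal{A}$, bimodules $\Omega^j$, bimodule product $\wedge$ adding degrees, $d^2=0$, graded Leibniz rule, $\Omega^j$ right-spanned by $da_0\wedge\cdots\wedge da_{j-1}$); $\mathcal{E}=\Omega^1(\mathcal{A})$ is a finitely generated projective right $\mathcal{A}$-module and $\wedge:\mathcal{E}\otimes_{\mathcal{A}}\mathcal{E}\to\Omega^2(\mathcal{A})$ is the induced product. A connection is a $\mathbb{C}$-linear $\nabla:\mathcal{E}\to\mathcal{E}\otimes_{\mathcal{A}}\mathcal{E}$ with $\nabla(\omega a)=\nabla(\omega)a+\omega\otimes_{\mathcal{A}}da$; torsionless means $\wedge\circ\nabla+d=0$. Assume $\mathcal{E}\otimes_{\mathcal{A}}\mathcal{E}=\ker(\wedge)\oplus\mathcal{F}$, $\mathcal{F}$ a right submodule with $Q:=\wedge|_{\mathcal{F}}:\mathcal{F}\to\Omega^2(\mathcal{A})$ a right module isomorphism; $P_{\rm sym}$ is the idempotent with image $\ker\wedge$ and kernel $\mathcal{F}$, $\sigma=2P_{\rm sym}-1$. With an idempotent $p\in M_n(\mathcal{A})$, $p(\mathcal{A}^n)=\mathcal{E}$, $\Phi_j=p(e_j)$, the Grassmann connection is $\nabla^{Gr}(\sum_j\Phi_ja_j)=\sum_j\Phi_j\otimes_{\mathcal{A}}da_j$ and $\nabla_0:=\nabla^{Gr}-Q^{-1}\circ(\wedge\circ\nabla^{Gr}+d)$. $\mathcal{Z}(\mathcal{M})=\{m:am=ma\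 \forall a\}$; $\mathcal{E}$ is centered if $\mathcal{Z}(\mathcal{E})$ right-spans $\mathcal{E}$. A pseudo-Riemannian bilinear metric is an $\mathcal{A}$-bimodule map $g:\mathcal{E}\otimes_{\mathcal{A}}\mathcal{E}\to\mathcal{A}$ with $g\circ\sigma=g$ such that $e\mapsto g(e\otimes_{\mathcal{A}}-)$ is a right module isomorphism $\mathcal{E}\to\mathrm{Hom}_{\mathcal{A}}(\mathcal{E},\mathcal{A})$. $\nabla$ is compatible with $g$ on $\mathcal{Z}(\mathcal{E})$ if for all $\omega,\eta\in\mathcal{Z}(\mathcal{E})$: $(g\otimes_{\mathcal{A}}\mathrm{id})\{\sigma_{23}(\nabla(\omega)\otimes_{\mathcal{A}}\eta)+\omega\otimes_{\mathcal{A}}\nabla(\eta)\}=d(g(\omega\otimes_{\mathcal{A}}\eta))$, where $\sigma_{23}=\mathrm{id}\otimes_{\mathcal{A}}\sigma$ on $\mathcal{E}^{\otimes_{\mathcal{A}}3}$ and $(g\otimes_{\mathcal{A}}\mathrm{id})(x\otimes y\otimes z)=g(x\otimes_{\mathcal{A}}y)z$. *)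

theory Defs
  imports Complex_Main "HOL-Library.Function_Algebras"
begin

text \<open>
Conventions.
  'a  : the algebra A (a unital ring, complex structure given by a central ring
        homomorphism emb : complex => A, i.e. c.a = emb c * a).
  'e  : the bimodule Omega^1(A) = E (left action lE, right action rE).
  'w  : the bimodule Omega^2(A)   (left action lW, right action rW).
  d0 : A -> Omega^1, d1 : Omega^1 -> Omega^2, wedge : Omega^1 x Omega^1 -> Omega^2.
  Omega^j for j >= 3 plays no role and may be taken to be 0.
  p : n x n idempotent matrix, Phi j = p(e_j), phi j = j-th coordinate functional of
      the isomorphism E = p(A^n).
  E (x)_A E is realised concretely as  p.(E^n)  (= p(A^n) (x)_A E), i.e. as
  functions t : nat => 'e with t j = sum_k p j k . t k for j<n and t j = 0 for j>=n,
  the elementary tensor x (x) y being  j |-> phi j x . y.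
\<close>

definition cemb :: "(complex \<Rightarrow> 'a::ring_1) \<Rightarrow> bool" where
  "cemb emb \<longleftrightarrow> (\<forall>c c'. emb (c + c') = emb c + emb c') \<and> (\<forall>c c'. emb (c * c') = emb c * emb c')
     \<and> emb 1 = 1 \<and> (\<forall>c a. emb c * a = a * emb c)"

definition bimod :: "(complex \<Rightarrow> 'a::ring_1) \<Rightarrow> ('a \<Rightarrow> 'm::ab_group_add \<Rightarrow> 'm) \<Rightarrow> ('m \<Rightarrow> 'a \<Rightarrow> 'm) \<Rightarrow> bool" where
  "bimod emb l r \<longleftrightarrow>
     (\<forall>m. l 1 m = m) \<and> (\<forall>a b m. l (a * b) m = l a (l b m)) \<and>
     (\<forall>a b m. l (a + b) m = l a m + l b m) \<and> (\<forall>a m m'. l a (m + m') = l a m + l a m') \<and>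
     (\<forall>m. r m 1 = m) \<and> (\<forall>a b m. r m (a * b) = r (r m a) b) \<and>
     (\<forall>a b m. r m (a + b) = r m a + r m b) \<and> (\<forall>a m m'. r (m + m') a = r m a + r m' a) \<and>
     (\<forall>a b m. l a (r m b) = r (l a m) b) \<and> (\<forall>c m. l (emb c) m = r m (emb c))"

definition calculus ::
  "(complex \<Rightarrow> 'a::ring_1) \<Rightarrow> ('a \<Rightarrow> 'e::ab_group_add \<Rightarrow> 'e) \<Rightarrow> ('e \<Rightarrow> 'a \<Rightarrow> 'e)
   \<Rightarrow> ('a \<Rightarrow> 'w::ab_group_add \<Rightarrow> 'w) \<Rightarrow> ('w \<Rightarrow> 'a \<Rightarrow> 'w)
   \<Rightarrow> ('a \<Rightarrow> 'e) \<Rightarrow> ('e \<Rightarrow> 'w) \<Rightarrow> ('e \<Rightarrow> 'e \<Rightarrow> 'w) \<Rightarrow> bool" where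
  "calculus emb lE rE lW rW d0 d1 wedge \<longleftrightarrow>
     cemb emb \<and> bimod emb lE rE \<and> bimod emb lW rW \<and>
     (\<forall>x x' y. wedge (x + x') y = wedge x y + wedge x' y) \<and>
     (\<forall>x y y'. wedge x (y + y') = wedge x y + wedge x y') \<and>
     (\<forall>a x y. wedge (lE a x) y = lW a (wedge x y)) \<and>
     (\<forall>a x y. wedge (rE x a) y = wedge x (lE a y)) \<and>
     (\<forall>a x y. wedge x (rE y a) = rW (wedge x y) a) \<and>
     (\<forall>a b. d0 (a + b) = d0 a + d0 b) \<and>
     (\<forall>c a. d0 (emb c * a) = lE (emb c) (d0 a)) \<and>
     (\<forall>a b. d0 (a * b) = rE (d0 a) b + lE a (d0 b)) \<and>
     (\<forall>x y. d1 (x + y) = d1 x + d1 y) \<and>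
     (\<forall>c x. d1 (lE (emb c) x) = lW (emb c) (d1 x)) \<and>
     (\<forall>a x. d1 (lE a x) = wedge (d0 a) x + lW a (d1 x)) \<and>
     (\<forall>a x. d1 (rE x a) = rW (d1 x) a - wedge x (d0 a)) \<and>
     (\<forall>a. d1 (d0 a) = 0) \<and>
     (\<forall>x. \<exists>L::('a \<times> 'a) list. x = sum_list (map (\<lambda>(a, b). rE (d0 a) b) L)) \<and>
     (\<forall>w. \<exists>L::('a \<times> 'a \<times> 'a) list.
            w = sum_list (map (\<lambda>(a, b, c). rW (wedge (d0 a) (d0 b)) c) L))"

definition proj_pres ::
  "('e::ab_group_add \<Rightarrow> 'a::ring_1 \<Rightarrow> 'e) \<Rightarrow> nat \<Rightarrow> (nat \<Rightarrow> nat \<Rightarrow> 'a) \<Rightarrow> (nat \<Rightarrow> 'e)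
   \<Rightarrow> (nat \<Rightarrow> 'e \<Rightarrow> 'a) \<Rightarrow> bool" where
  "proj_pres rE n p Phi phi \<longleftrightarrow>
     (\<forall>j<n. \<forall>k<n. (\<Sum>l<n. p j l * p l k) = p j k) \<and>
     (\<forall>j<n. \<forall>x y. phi j (x + y) = phi j x + phi j y) \<and>
     (\<forall>j<n. \<forall>x a. phi j (rE x a) = phi j x * a) \<and>
     (\<forall>x. x = (\<Sum>j<n. rE (Phi j) (phi j x))) \<and>
     (\<forall>j<n. \<forall>k<n. phi j (Phi k) = p j k)"

definition TT :: "('a \<Rightarrow> 'e \<Rightarrow> 'e) \<Rightarrow> nat \<Rightarrow> (nat \<Rightarrow> nat \<Rightarrow> 'a) \<Rightarrow> (nat \<Rightarrow> 'e::ab_group_add) set" where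
  "TT lE n p = {t. \<forall>j. t j = (if j < n then (\<Sum>k<n. lE (p j k) (t k)) else 0)}"

definition tens :: "('a \<Rightarrow> 'e \<Rightarrow> 'e) \<Rightarrow> nat \<Rightarrow> (nat \<Rightarrow> 'e \<Rightarrow> 'a) \<Rightarrow> 'e \<Rightarrow> 'e \<Rightarrow> (nat \<Rightarrow> 'e::zero)" where
  "tens lE n phi x y = (\<lambda>j. if j < n then lE (phi j x) y else 0)"

definition rT :: "('e \<Rightarrow> 'a \<Rightarrow> 'e) \<Rightarrow> (nat \<Rightarrow> 'e) \<Rightarrow> 'a \<Rightarrow> (nat \<Rightarrow> 'e)" where
  "rT rE t a = (\<lambda>j. rE (t j) a)"

definition lT :: "('a \<Rightarrow> 'e \<Rightarrow> 'e) \<Rightarrow> nat \<Rightarrow> (nat \<Rightarrow> 'e) \<Rightarrow> (nat \<Rightarrow> 'e \<Rightarrow> 'a)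
                  \<Rightarrow> 'a \<Rightarrow> (nat \<Rightarrow> 'e::ab_group_add) \<Rightarrow> (nat \<Rightarrow> 'e)" where
  "lT lE n Phi phi a t = (\<lambda>j. if j < n then (\<Sum>k<n. lE (phi j (lE a (Phi k))) (t k)) else 0)"

definition wedgeT :: "nat \<Rightarrow> (nat \<Rightarrow> 'e) \<Rightarrow> ('e \<Rightarrow> 'e \<Rightarrow> 'w::comm_monoid_add) \<Rightarrow> (nat \<Rightarrow> 'e) \<Rightarrow> 'w" where
  "wedgeT n Phi wedge t = (\<Sum>j<n. wedge (Phi j) (t j))"

definition splitting ::
  "('a::ring_1 \<Rightarrow> 'e::ab_group_add \<Rightarrow> 'e) \<Rightarrow> ('e \<Rightarrow> 'a \<Rightarrow> 'e) \<Rightarrow> nat \<Rightarrow> (nat \<Rightarrow> nat \<Rightarrow> 'a)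
   \<Rightarrow> (nat \<Rightarrow> 'e) \<Rightarrow> ('e \<Rightarrow> 'e \<Rightarrow> 'w::ab_group_add) \<Rightarrow> (nat \<Rightarrow> 'e) set \<Rightarrow> bool" where
  "splitting lE rE n p Phi wedge F \<longleftrightarrow>
     F \<subseteq> TT lE n p \<and> 0 \<in> F \<and> (\<forall>s\<in>F. \<forall>t\<in>F. s + t \<in> F) \<and> (\<forall>t\<in>F. \<forall>a. rT rE t a \<in> F) \<and>
     (\<forall>t\<in>TT lE n p. \<exists>k f. k \<in> TT lE n p \<and> wedgeT n Phi wedge k = 0 \<and> f \<in> F \<and> t = k + f) \<and>
     (\<forall>f\<in>F. wedgeT n Phi wedge f = 0 \<longrightarrow> f = 0) \<and>
     bij_betw (wedgeT n Phi wedge) F UNIV"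

definition Psym :: "('a \<Rightarrow> 'e \<Rightarrow> 'e) \<Rightarrow> nat \<Rightarrow> (nat \<Rightarrow> nat \<Rightarrow> 'a) \<Rightarrow> (nat \<Rightarrow> 'e)
    \<Rightarrow> ('e \<Rightarrow> 'e \<Rightarrow> 'w::comm_monoid_add) \<Rightarrow> (nat \<Rightarrow> 'e::ab_group_add) set \<Rightarrow> (nat \<Rightarrow> 'e) \<Rightarrow> (nat \<Rightarrow> 'e)" where
  "Psym lE n p Phi wedge F t =
     (THE k. k \<in> TT lE n p \<and> wedgeT n Phi wedge k = 0 \<and> t - k \<in> F)"

definition sigma :: "('a \<Rightarrow> 'e \<Rightarrow> 'e) \<Rightarrow> nat \<Rightarrow> (nat \<Rightarrow> nat \<Rightarrow> 'a) \<Rightarrow> (nat \<Rightarrow> 'e)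
    \<Rightarrow> ('e \<Rightarrow> 'e \<Rightarrow> 'w::comm_monoid_add) \<Rightarrow> (nat \<Rightarrow> 'e::ab_group_add) set \<Rightarrow> (nat \<Rightarrow> 'e) \<Rightarrow> (nat \<Rightarrow> 'e)" where
  "sigma lE n p Phi wedge F t =
     Psym lE n p Phi wedge F t + Psym lE n p Phi wedge F t - t"

definition nablaGr :: "('a \<Rightarrow> 'e \<Rightarrow> 'e) \<Rightarrow> nat \<Rightarrow> (nat \<Rightarrow> 'e) \<Rightarrow> (nat \<Rightarrow> 'e \<Rightarrow> 'a)
    \<Rightarrow> ('a \<Rightarrow> 'e) \<Rightarrow> 'e \<Rightarrow> (nat \<Rightarrow> 'e::comm_monoid_add)" where
  "nablaGr lE n Phi phi d0 x = (\<Sum>j<n. tens lE n phi (Phi j) (d0 (phi j x)))"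

definition nabla0 :: "('a \<Rightarrow> 'e \<Rightarrow> 'e) \<Rightarrow> nat \<Rightarrow> (nat \<Rightarrow> 'e) \<Rightarrow> (nat \<Rightarrow> 'e \<Rightarrow> 'a)
    \<Rightarrow> ('a \<Rightarrow> 'e) \<Rightarrow> ('e \<Rightarrow> 'w::comm_monoid_add) \<Rightarrow> ('e \<Rightarrow> 'e \<Rightarrow> 'w) \<Rightarrow> (nat \<Rightarrow> 'e::ab_group_add) set
    \<Rightarrow> 'e \<Rightarrow> (nat \<Rightarrow> 'e)" where
  "nabla0 lE n Phi phi d0 d1 wedge F x =
     nablaGr lE n Phi phi d0 x
     - inv_into F (wedgeT n Phi wedge) (wedgeT n Phi wedge (nablaGr lE n Phi phi d0 x) + d1 x)"

definition ZE :: "('a \<Rightarrow> 'e \<Rightarrow> 'e) \<Rightarrow> ('e \<Rightarrow> 'a \<Rightarrow> 'e) \<Rightarrow> 'e set" where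
  "ZE lE rE = {x. \<forall>a. lE a x = rE x a}"

definition centered :: "('a \<Rightarrow> 'e \<Rightarrow> 'e) \<Rightarrow> ('e \<Rightarrow> 'a \<Rightarrow> 'e::ab_group_add) \<Rightarrow> bool" where
  "centered lE rE \<longleftrightarrow>
     (\<forall>x. \<exists>L::('e \<times> 'a) list. (\<forall>(z, a)\<in>set L. z \<in> ZE lE rE) \<and> x = sum_list (map (\<lambda>(z, a). rE z a) L))"

definition metric ::
  "('a::ring_1 \<Rightarrow> 'e::ab_group_add \<Rightarrow> 'e) \<Rightarrow> ('e \<Rightarrow> 'a \<Rightarrow> 'e) \<Rightarrow> nat \<Rightarrow> (nat \<Rightarrow> nat \<Rightarrow> 'a)
   \<Rightarrow> (nat \<Rightarrow> 'e) \<Rightarrow> (nat \<Rightarrow> 'e \<Rightarrow> 'a) \<Rightarrow> ('e \<Rightarrow> 'e \<Rightarrow> 'w::ab_group_add) \<Rightarrow> (nat \<Rightarrow> 'e) set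
   \<Rightarrow> ((nat \<Rightarrow> 'e) \<Rightarrow> 'a) \<Rightarrow> bool" where
  "metric lE rE n p Phi phi wedge F g \<longleftrightarrow>
     (\<forall>s\<in>TT lE n p. \<forall>t\<in>TT lE n p. g (s + t) = g s + g t) \<and>
     (\<forall>t\<in>TT lE n p. \<forall>a. g (lT lE n Phi phi a t) = a * g t) \<and>
     (\<forall>t\<in>TT lE n p. \<forall>a. g (rT rE t a) = g t * a) \<and>
     (\<forall>t\<in>TT lE n p. g (sigma lE n p Phi wedge F t) = g t) \<and>
     (\<forall>\<psi>::'e \<Rightarrow> 'a. ((\<forall>x y. \<psi> (x + y) = \<psi> x + \<psi> y) \<and> (\<forall>x a. \<psi> (rE x a) = \<psi> x * a))
        \<longrightarrow> (\<exists>!e. \<forall>f. g (tens lE n phi e f) = \<psi> f))"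

definition connection ::
  "(complex \<Rightarrow> 'a::ring_1) \<Rightarrow> ('a \<Rightarrow> 'e::ab_group_add \<Rightarrow> 'e) \<Rightarrow> ('e \<Rightarrow> 'a \<Rightarrow> 'e) \<Rightarrow> nat
   \<Rightarrow> (nat \<Rightarrow> nat \<Rightarrow> 'a) \<Rightarrow> (nat \<Rightarrow> 'e \<Rightarrow> 'a) \<Rightarrow> ('a \<Rightarrow> 'e) \<Rightarrow> ('e \<Rightarrow> (nat \<Rightarrow> 'e)) \<Rightarrow> bool" where
  "connection emb lE rE n p phi d0 nabla \<longleftrightarrow>
     (\<forall>x. nabla x \<in> TT lE n p) \<and>
     (\<forall>x y. nabla (x + y) = nabla x + nabla y) \<and>
     (\<forall>c x. nabla (lE (emb c) x) = rT rE (nabla x) (emb c)) \<and>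
     (\<forall>x a. nabla (rE x a) = rT rE (nabla x) a + tens lE n phi x (d0 a))"

definition torsionless :: "nat \<Rightarrow> (nat \<Rightarrow> 'e) \<Rightarrow> ('e \<Rightarrow> 'w::ab_group_add) \<Rightarrow> ('e \<Rightarrow> 'e \<Rightarrow> 'w)
    \<Rightarrow> ('e \<Rightarrow> (nat \<Rightarrow> 'e)) \<Rightarrow> bool" where
  "torsionless n Phi d1 wedge nabla \<longleftrightarrow> (\<forall>x. wedgeT n Phi wedge (nabla x) + d1 x = 0)"

text \<open>(g (x) id)(x (x) t) for x in E, t in E (x)_A E.\<close>
definition gid :: "('a \<Rightarrow> 'e \<Rightarrow> 'e) \<Rightarrow> nat \<Rightarrow> (nat \<Rightarrow> 'e) \<Rightarrow> (nat \<Rightarrow> 'e \<Rightarrow> 'a)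
    \<Rightarrow> ((nat \<Rightarrow> 'e) \<Rightarrow> 'a) \<Rightarrow> 'e \<Rightarrow> (nat \<Rightarrow> 'e) \<Rightarrow> 'e::ab_group_add" where
  "gid lE n Phi phi g x t = (\<Sum>j<n. lE (g (tens lE n phi x (Phi j))) (t j))"

text \<open>Compatibility with g on Z(E):
 (g (x) id)(sigma_23 (nabla w (x) e) + w (x) nabla e) = d g(w (x) e); writing
 nabla w = sum_j Phi_j (x) (nabla w)_j, sigma_23 (nabla w (x) e) = sum_j Phi_j (x) sigma((nabla w)_j (x) e).\<close>
definition compatible ::
  "('a::ring_1 \<Rightarrow> 'e::ab_group_add \<Rightarrow> 'e) \<Rightarrow> ('e \<Rightarrow> 'a \<Rightarrow> 'e) \<Rightarrow> nat \<Rightarrow> (nat \<Rightarrow> nat \<Rightarrow> 'a)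
   \<Rightarrow> (nat \<Rightarrow> 'e) \<Rightarrow> (nat \<Rightarrow> 'e \<Rightarrow> 'a) \<Rightarrow> ('a \<Rightarrow> 'e) \<Rightarrow> ('e \<Rightarrow> 'e \<Rightarrow> 'w::ab_group_add)
   \<Rightarrow> (nat \<Rightarrow> 'e) set \<Rightarrow> ((nat \<Rightarrow> 'e) \<Rightarrow> 'a) \<Rightarrow> ('e \<Rightarrow> (nat \<Rightarrow> 'e)) \<Rightarrow> bool" where
  "compatible lE rE n p Phi phi d0 wedge F g nabla \<longleftrightarrow>
     (\<forall>w\<in>ZE lE rE. \<forall>e\<in>ZE lE rE.
        (\<Sum>j<n. gid lE n Phi phi g (Phi j)
                   (sigma lE n p Phi wedge F (tens lE n phi (nabla w j) e)))
        + gid lE n Phi phi g w (nabla e)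
        = d0 (g (tens lE n phi w e)))"

definition zrep :: "('a \<Rightarrow> 'e \<Rightarrow> 'e) \<Rightarrow> ('e \<Rightarrow> 'a \<Rightarrow> 'e) \<Rightarrow> nat \<Rightarrow> (nat \<Rightarrow> 'e \<Rightarrow> 'a)
    \<Rightarrow> ('e \<times> 'e) list \<Rightarrow> (nat \<Rightarrow> 'e::ab_group_add) \<Rightarrow> bool" where
  "zrep lE rE n phi R t \<longleftrightarrow>
     (\<forall>(x, y)\<in>set R. y \<in> ZE lE rE) \<and> t = sum_list (map (\<lambda>(x, y). tens lE n phi x y) R)"

definition gg01 :: "('a \<Rightarrow> 'e \<Rightarrow> 'e) \<Rightarrow> nat \<Rightarrow> (nat \<Rightarrow> 'e \<Rightarrow> 'a) \<Rightarrow> ((nat \<Rightarrow> 'e::zero) \<Rightarrow> 'a::ring_1)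
    \<Rightarrow> ('e \<times> 'e) list \<Rightarrow> 'e \<Rightarrow> 'e \<Rightarrow> 'a" where
  "gg01 lE n phi g R u v = sum_list (map (\<lambda>(x, y). g (tens lE n phi u x) * g (tens lE n phi v y)) R)"

definition gg10 :: "('a \<Rightarrow> 'e \<Rightarrow> 'e) \<Rightarrow> nat \<Rightarrow> (nat \<Rightarrow> 'e \<Rightarrow> 'a) \<Rightarrow> ((nat \<Rightarrow> 'e::zero) \<Rightarrow> 'a::ring_1)
    \<Rightarrow> ('e \<times> 'e) list \<Rightarrow> 'e \<Rightarrow> 'e \<Rightarrow> 'a" where
  "gg10 lE n phi g R u v = sum_list (map (\<lambda>(x, y). g (tens lE n phi u y) * g (tens lE n phi v x)) R)"

end

theory Submission
  imports Defs
begin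

lemma additive_sum_list: "additive f \<Longrightarrow> f (sum_list xs) = sum_list (map f xs)"
  by (induction xs) (auto simp: additive.add additive.zero)

locale L5 =
  fixes emb :: "complex \<Rightarrow> 'a::ring_1"
    and lE :: "'a \<Rightarrow> 'e::ab_group_add \<Rightarrow> 'e" and rE :: "'e \<Rightarrow> 'a \<Rightarrow> 'e"
    and lW :: "'a \<Rightarrow> 'w::ab_group_add \<Rightarrow> 'w" and rW :: "'w \<Rightarrow> 'a \<Rightarrow> 'w"
    and d0 :: "'a \<Rightarrow> 'e" and d1 :: "'e \<Rightarrow> 'w" and wedge :: "'e \<Rightarrow> 'e \<Rightarrow> 'w"
    and n :: nat and p :: "nat \<Rightarrow> nat \<Rightarrow> 'a" and Phi :: "nat \<Rightarrow> 'e" and phi :: "nat \<Rightarrow> 'e \<Rightarrow> 'a"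
    and F :: "(nat \<Rightarrow> 'e) set" and g :: "(nat \<Rightarrow> 'e) \<Rightarrow> 'a"
  assumes calc: "calculus emb lE rE lW rW d0 d1 wedge"
    and pres: "proj_pres rE n p Phi phi"
    and split: "splitting lE rE n p Phi wedge F"
    and cent: "centered lE rE"
    and sigma_flip: "\<forall>x\<in>ZE lE rE. \<forall>y\<in>ZE lE rE.
        sigma lE n p Phi wedge F (tens lE n phi x y) = tens lE n phi y x"
    and met: "metric lE rE n p Phi phi wedge F g"
begin

abbreviation "T \<equiv> tens lE n phi"
abbreviation "TTs \<equiv> TT lE n p"
abbreviation "sig \<equiv> sigma lE n p Phi wedge F"
abbreviation "Ps \<equiv> Psym lE n p Phi wedge F"
abbreviation "wT \<equiv> wedgeT n Phi wedge"
abbreviation "Z \<equiv> ZE lE rE"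

lemma bE: "bimod emb lE rE" using calc unfolding calculus_def by auto
lemma bW: "bimod emb lW rW" using calc unfolding calculus_def by auto

lemma lE_addL: "lE (a + b) m = lE a m + lE b m" using bE unfolding bimod_def by auto
lemma lE_addR: "lE a (m + m') = lE a m + lE a m'" using bE unfolding bimod_def by auto
lemma lE_mult: "lE (a * b) m = lE a (lE b m)" using bE unfolding bimod_def by auto
lemma lE_1: "lE 1 m = m" using bE unfolding bimod_def by auto
lemma rE_addL: "rE (m + m') a = rE m a + rE m' a" using bE unfolding bimod_def by auto
lemma rE_addR: "rE m (a + b) = rE m a + rE m b" using bE unfolding bimod_def by auto
lemma rE_mult: "rE m (a * b) = rE (rE m a) b" using bE unfolding bimod_def by auto
lemma rE_1: "rE m 1 = m" using bE unfolding bimod_def by auto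
lemma lr: "lE a (rE m b) = rE (lE a m) b" using bE unfolding bimod_def by auto
lemma rW_addL: "rW (m + m') a = rW m a + rW m' a" using bW unfolding bimod_def by auto

lemma add_lE_R: "additive (lE a)" by (unfold_locales) (rule lE_addR)
lemma add_lE_L: "additive (\<lambda>a. lE a m)" by (unfold_locales) (rule lE_addL)
lemma add_rE_L: "additive (\<lambda>m. rE m a)" by (unfold_locales) (rule rE_addL)
lemma add_rE_R: "additive (rE m)" by (unfold_locales) (rule rE_addR)
lemma add_rW_L: "additive (\<lambda>m. rW m a)" by (unfold_locales) (rule rW_addL)

lemma wedge_addR: "wedge x (y + y') = wedge x y + wedge x y'" using calc unfolding calculus_def by auto
lemma wedge_rE: "wedge x (rE y a) = rW (wedge x y) a" using calc unfolding calculus_def by auto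
lemma add_wedge: "additive (wedge x)" by (unfold_locales) (rule wedge_addR)

lemma phi_add: "j < n \<Longrightarrow> phi j (x + y) = phi j x + phi j y" using pres unfolding proj_pres_def by auto
lemma phi_r: "j < n \<Longrightarrow> phi j (rE x a) = phi j x * a" using pres unfolding proj_pres_def by auto
lemma decomp: "x = (\<Sum>j<n. rE (Phi j) (phi j x))" using pres unfolding proj_pres_def by auto
lemma phiPhi: "j < n \<Longrightarrow> k < n \<Longrightarrow> phi j (Phi k) = p j k" using pres unfolding proj_pres_def by auto
lemma add_phi: "j < n \<Longrightarrow> additive (phi j)" by (unfold_locales) (rule phi_add)

lemma g_add: "s \<in> TTs \<Longrightarrow> t \<in> TTs \<Longrightarrow> g (s + t) = g s + g t" using met unfolding metric_def by auto
lemma g_lT: "t \<in> TTs \<Longrightarrow> g (lT lE n Phi phi a t) = a * g t" using met unfolding metric_def by auto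
lemma g_rT: "t \<in> TTs \<Longrightarrow> g (rT rE t a) = g t * a" using met unfolding metric_def by auto
lemma g_sig: "t \<in> TTs \<Longrightarrow> g (sig t) = g t" using met unfolding metric_def by auto

lemma sum_phi: "j < n \<Longrightarrow> (\<Sum>k<n. p j k * phi k x) = phi j x"
proof -
  assume j: "j < n"
  have "phi j x = phi j (\<Sum>k<n. rE (Phi k) (phi k x))" using decomp by metis
  also have "\<dots> = (\<Sum>k<n. phi j (rE (Phi k) (phi k x)))" using additive.sum[OF add_phi[OF j]] by simp
  also have "\<dots> = (\<Sum>k<n. p j k * phi k x)" using j by (simp add: phi_r phiPhi)
  finally show ?thesis by simp
qed

lemma tens_TT: "T x y \<in> TTs"
proof -
  have "lE (phi j x) y = (\<Sum>k<n. lE (p j k) (lE (phi k x) y))" if "j < n" for j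
  proof -
    have "(\<Sum>k<n. lE (p j k) (lE (phi k x) y)) = (\<Sum>k<n. lE (p j k * phi k x) y)" by (simp add: lE_mult)
    also have "\<dots> = lE (\<Sum>k<n. p j k * phi k x) y" using additive.sum[OF add_lE_L, of "\<lambda>k. p j k * phi k x"] by simp
    finally show ?thesis using sum_phi[OF that] by simp
  qed
  then show ?thesis unfolding TT_def tens_def by auto
qed


lemma TT_D: "t \<in> TTs \<Longrightarrow> t j = (if j < n then (\<Sum>k<n. lE (p j k) (t k)) else 0)"
  unfolding TT_def by blast

lemma TT_D1: "t \<in> TTs \<Longrightarrow> j < n \<Longrightarrow> t j = (\<Sum>k<n. lE (p j k) (t k))"
  using TT_D[of t j] by (simp only: if_True)
lemma TT_D0: "t \<in> TTs \<Longrightarrow> \<not> j < n \<Longrightarrow> t j = 0"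
  using TT_D[of t j] by (simp only: if_False)

lemma TT_I: "(\<And>j. t j = (if j < n then (\<Sum>k<n. lE (p j k) (t k)) else 0)) \<Longrightarrow> t \<in> TTs"
  unfolding TT_def by blast

lemma TT_add: "s \<in> TTs \<Longrightarrow> t \<in> TTs \<Longrightarrow> s + t \<in> TTs"
proof (rule TT_I)
  fix j assume s: "s \<in> TTs" and t: "t \<in> TTs"
  have "(s + t) j = s j + t j" by simp
  also have "\<dots> = (if j < n then (\<Sum>k<n. lE (p j k) (s k)) + (\<Sum>k<n. lE (p j k) (t k)) else 0)"
    using TT_D1[OF s, of j] TT_D1[OF t, of j] TT_D0[OF s, of j] TT_D0[OF t, of j] by (cases "j < n") (simp only: if_True if_False; simp)+
  also have "\<dots> = (if j < n then (\<Sum>k<n. lE (p j k) ((s + t) k)) else 0)"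
    by (simp add: lE_addR sum.distrib)
  finally show "(s + t) j = \<dots>" .
qed

lemma TT_diff: "s \<in> TTs \<Longrightarrow> t \<in> TTs \<Longrightarrow> s - t \<in> TTs"
proof (rule TT_I)
  fix j assume s: "s \<in> TTs" and t: "t \<in> TTs"
  have "(s - t) j = s j - t j" by simp
  also have "\<dots> = (if j < n then (\<Sum>k<n. lE (p j k) (s k)) - (\<Sum>k<n. lE (p j k) (t k)) else 0)"
    using TT_D1[OF s, of j] TT_D1[OF t, of j] TT_D0[OF s, of j] TT_D0[OF t, of j] by (cases "j < n") (simp only: if_True if_False; simp)+
  also have "\<dots> = (if j < n then (\<Sum>k<n. lE (p j k) ((s - t) k)) else 0)"
    by (simp add: additive.diff[OF add_lE_R] sum_subtractf)
  finally show "(s - t) j = \<dots>" .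
qed

lemma TT_zero: "0 \<in> TTs"
  by (rule TT_I) (simp add: additive.zero[OF add_lE_R])

lemma TT_rT: "t \<in> TTs \<Longrightarrow> rT rE t a \<in> TTs"
proof (rule TT_I)
  fix j
  assume t: "t \<in> TTs"
  show "rT rE t a j = (if j < n then (\<Sum>k<n. lE (p j k) (rT rE t a k)) else 0)"
  proof (cases "j < n")
    case True
    have "rE (t j) a = rE (\<Sum>k<n. lE (p j k) (t k)) a" using TT_D1[OF t True] by (rule arg_cong)
    also have "\<dots> = (\<Sum>k<n. rE (lE (p j k) (t k)) a)"
      by (rule additive.sum[OF add_rE_L])
    also have "\<dots> = (\<Sum>k<n. lE (p j k) (rE (t k) a))"
      by (simp only: lr)
    finally show ?thesis using True by (simp add: rT_def)
  next
    case False
    then show ?thesis using TT_D0[OF t False] by (simp add: rT_def additive.zero[OF add_rE_L])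
  qed
qed

lemma TT_sum_list: "(\<And>x. x \<in> set xs \<Longrightarrow> x \<in> TTs) \<Longrightarrow> sum_list xs \<in> TTs"
  by (induction xs) (auto simp: TT_zero TT_add)

lemma g_zero: "g 0 = 0"
  using g_add[OF TT_zero TT_zero] by simp

lemma g_diff: "s \<in> TTs \<Longrightarrow> t \<in> TTs \<Longrightarrow> g (s - t) = g s - g t"
  using g_add[OF TT_diff, of s t t] by (simp add: algebra_simps)

lemma g_sum_list: "(\<And>x. x \<in> set xs \<Longrightarrow> x \<in> TTs) \<Longrightarrow> g (sum_list xs) = sum_list (map g xs)"
  by (induction xs) (auto simp: g_zero g_add TT_sum_list)

lemma tens_addL: "T (x + x') y = T x y + T x' y"
  unfolding tens_def by (auto simp: phi_add lE_addL)

lemma tens_addR: "T x (y + y') = T x y + T x y'"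
  unfolding tens_def by (auto simp: lE_addR)

lemma add_tensL: "additive (\<lambda>x. T x y)" by unfold_locales (rule tens_addL)
lemma add_tensR: "additive (T x)" by unfold_locales (rule tens_addR)

lemma tens_rE_R: "T x (rE y a) = rT rE (T x y) a"
  unfolding tens_def rT_def by (auto simp: lr additive.zero[OF add_rE_L])

lemma tens_lE_R: "T v (lE a y) = T (rE v a) y"
  unfolding tens_def by (auto simp: phi_r lE_mult)

lemma tens_rE_L: "y \<in> Z \<Longrightarrow> T (rE z a) y = rT rE (T z y) a"
  unfolding ZE_def by (simp add: tens_lE_R[symmetric] tens_rE_R)

lemma lT_tens: "lT lE n Phi phi a (T v y) = T (lE a v) y"
proof -
  have "(\<Sum>k<n. lE (phi j (lE a (Phi k))) (lE (phi k v) y)) = lE (phi j (lE a v)) y" if j: "j < n" for j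
  proof -
    have "phi j (lE a v) = phi j (lE a (\<Sum>k<n. rE (Phi k) (phi k v)))" using decomp by metis
    also have "\<dots> = (\<Sum>k<n. phi j (lE a (Phi k)) * phi k v)"
      by (simp add: additive.sum[OF add_lE_R] additive.sum[OF add_phi[OF j]] lr phi_r j)
    finally have "phi j (lE a v) = (\<Sum>k<n. phi j (lE a (Phi k)) * phi k v)" .
    then show ?thesis by (simp add: additive.sum[OF add_lE_L] lE_mult)
  qed
  then show ?thesis unfolding lT_def tens_def by auto
qed

lemma ZD: "v \<in> Z \<Longrightarrow> lE a v = rE v a" unfolding ZE_def by simp

lemma g_tens_lE_L: "g (T (lE a v) y) = a * g (T v y)"
  using g_lT[OF tens_TT, of a v y] by (simp only: lT_tens)

lemma g_tens_rE_R: "g (T x (rE y a)) = g (T x y) * a"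
  using g_rT[OF tens_TT, of x y a] by (simp only: tens_rE_R)

lemma g_tens_lE_R: "v \<in> Z \<Longrightarrow> g (T v (lE c y)) = c * g (T v y)"
  by (simp only: tens_lE_R ZD[symmetric] g_tens_lE_L)

lemma g_tens_rE_L: "y \<in> Z \<Longrightarrow> g (T (rE z a) y) = g (T z y) * a"
  by (simp only: tens_rE_L g_rT tens_TT)

lemma g_central: "u \<in> Z \<Longrightarrow> y \<in> Z \<Longrightarrow> a * g (T u y) = g (T u y) * a"
proof -
  assume u: "u \<in> Z" and y: "y \<in> Z"
  have "a * g (T u y) = g (T (lE a u) y)" by (simp only: g_tens_lE_L)
  also have "\<dots> = g (T u (lE a y))" by (simp only: ZD[OF u] tens_lE_R)
  also have "\<dots> = g (T u y) * a" by (simp only: ZD[OF y] g_tens_rE_R)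
  finally show ?thesis .
qed


lemma F_TT: "f \<in> F \<Longrightarrow> f \<in> TTs" using split unfolding splitting_def by blast
lemma F_zero: "0 \<in> F" using split unfolding splitting_def by blast
lemma F_add: "f \<in> F \<Longrightarrow> f' \<in> F \<Longrightarrow> f + f' \<in> F" using split unfolding splitting_def by blast
lemma F_rT: "f \<in> F \<Longrightarrow> rT rE f a \<in> F" using split unfolding splitting_def by blast
lemma F_dec: "t \<in> TTs \<Longrightarrow> \<exists>k f. k \<in> TTs \<and> wT k = 0 \<and> f \<in> F \<and> t = k + f"
  using split unfolding splitting_def by blast
lemma F_inj: "f \<in> F \<Longrightarrow> wT f = 0 \<Longrightarrow> f = 0" using split unfolding splitting_def by blast
lemma F_bij: "bij_betw wT F UNIV" using split unfolding splitting_def by blast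

lemma rE_m1: "rE m (-1) = - m"
  using additive.minus[OF add_rE_R, of m 1] by (simp add: rE_1)

lemma rT_m1: "rT rE f (-1) = - f"
  unfolding rT_def by (rule ext) (simp add: rE_m1)

lemma F_diff: "f \<in> F \<Longrightarrow> f' \<in> F \<Longrightarrow> f - f' \<in> F"
  using F_add[of f "rT rE f' (-1)"] F_rT[of f' "-1"] by (simp add: rT_m1)

lemma add_wT: "additive wT"
  by unfold_locales (simp add: wedgeT_def wedge_addR sum.distrib)

lemma rT_diff: "rT rE (s - t) a = rT rE s a - rT rE t a"
  unfolding rT_def by (rule ext) (simp add: additive.diff[OF add_rE_L])

lemma rT_add: "rT rE (s + t) a = rT rE s a + rT rE t a"
  unfolding rT_def by (rule ext) (simp add: rE_addL)

lemma wT_rT: "wT (rT rE t a) = rW (wT t) a"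
  unfolding wedgeT_def rT_def by (simp add: wedge_rE additive.sum[OF add_rW_L])

definition "PP t k \<longleftrightarrow> k \<in> TTs \<and> wT k = 0 \<and> t - k \<in> F"

lemma PP_ex1: "t \<in> TTs \<Longrightarrow> \<exists>!k. PP t k"
proof -
  assume t: "t \<in> TTs"
  obtain k f where k: "k \<in> TTs" "wT k = 0" "f \<in> F" "t = k + f" using F_dec[OF t] by blast
  have "PP t k" unfolding PP_def using k by simp
  moreover have "k1 = k2" if "PP t k1" "PP t k2" for k1 k2
  proof -
    have "(t - k2) - (t - k1) \<in> F" using that F_diff unfolding PP_def by blast
    moreover have "(t - k2) - (t - k1) = k1 - k2" by simp
    moreover have "wT (k1 - k2) = 0" using that additive.diff[OF add_wT] unfolding PP_def by simp
    ultimately have "k1 - k2 = 0" using F_inj by metis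
    then show ?thesis by simp
  qed
  ultimately show ?thesis by blast
qed

lemma Ps_PP: "t \<in> TTs \<Longrightarrow> PP t (Ps t)"
proof -
  assume t: "t \<in> TTs"
  have "Ps t = (THE k. PP t k)" unfolding Psym_def PP_def by simp
  then show ?thesis using theI'[OF PP_ex1[OF t]] by simp
qed

lemma Ps_eq: "t \<in> TTs \<Longrightarrow> PP t k \<Longrightarrow> Ps t = k"
proof -
  assume t: "t \<in> TTs" and k: "PP t k"
  have "Ps t = (THE k. PP t k)" unfolding Psym_def PP_def by simp
  then show ?thesis using the1_equality[where P="PP t", OF PP_ex1[OF t] k] by simp
qed

lemma Ps_TT: "t \<in> TTs \<Longrightarrow> Ps t \<in> TTs" using Ps_PP unfolding PP_def by blast

lemma Ps_add: "s \<in> TTs \<Longrightarrow> t \<in> TTs \<Longrightarrow> Ps (s + t) = Ps s + Ps t"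
proof -
  assume s: "s \<in> TTs" and t: "t \<in> TTs"
  have "PP (s + t) (Ps s + Ps t)"
  proof -
    have e: "(s + t) - (Ps s + Ps t) = (s - Ps s) + (t - Ps t)" by simp
    have "(s + t) - (Ps s + Ps t) \<in> F" unfolding e using Ps_PP[OF s] Ps_PP[OF t] F_add
      unfolding PP_def by blast
    then show ?thesis using Ps_PP[OF s] Ps_PP[OF t] TT_add additive.add[OF add_wT]
      unfolding PP_def by auto
  qed
  then show ?thesis using Ps_eq TT_add[OF s t] by blast
qed

lemma Ps_rT: "t \<in> TTs \<Longrightarrow> Ps (rT rE t a) = rT rE (Ps t) a"
proof -
  assume t: "t \<in> TTs"
  have "PP (rT rE t a) (rT rE (Ps t) a)"
    using Ps_PP[OF t] TT_rT F_rT wT_rT rT_diff[symmetric] additive.zero[OF add_rW_L]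
    unfolding PP_def by metis
  then show ?thesis using Ps_eq TT_rT[OF t] by blast
qed

lemma Ps_ker: "t \<in> TTs \<Longrightarrow> wT t = 0 \<Longrightarrow> Ps t = t"
  using Ps_eq[of t t] F_zero unfolding PP_def by simp

lemma sig_def': "sig t = Ps t + Ps t - t" unfolding sigma_def by simp

lemma sig_TT: "t \<in> TTs \<Longrightarrow> sig t \<in> TTs"
  unfolding sig_def' using Ps_TT TT_add TT_diff by blast

lemma sig_add: "s \<in> TTs \<Longrightarrow> t \<in> TTs \<Longrightarrow> sig (s + t) = sig s + sig t"
  unfolding sig_def' by (simp add: Ps_add algebra_simps)

lemma sig_rT: "t \<in> TTs \<Longrightarrow> sig (rT rE t a) = rT rE (sig t) a"
  unfolding sig_def' by (simp add: Ps_rT rT_add rT_diff)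

lemma sig_ker: "t \<in> TTs \<Longrightarrow> wT t = 0 \<Longrightarrow> sig t = t"
  unfolding sig_def' by (simp add: Ps_ker)

lemma sig_zero: "sig 0 = 0"
  using sig_ker[OF TT_zero] additive.zero[OF add_wT] by simp

lemma sig_tens_Z: "y \<in> Z \<Longrightarrow> sig (T x y) = T y x"
proof -
  assume y: "y \<in> Z"
  have main: "(\<forall>(z, a)\<in>set L. z \<in> Z) \<Longrightarrow>
      sig (T (sum_list (map (\<lambda>(z, a). rE z a) L)) y) = T y (sum_list (map (\<lambda>(z, a). rE z a) L))" for L
  proof (induction L)
    case Nil
    show ?case by (simp only: list.map(1) sum_list.Nil additive.zero[OF add_tensL] additive.zero[OF add_tensR] sig_zero)
  next
    case (Cons za L)
    obtain z a where za: "za = (z, a)" by fastforce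
    have z: "z \<in> Z" using Cons.prems za by auto
    let ?r = "sum_list (map (\<lambda>(z, a). rE z a) L)"
    have "sig (T (rE z a + ?r) y) = sig (T (rE z a) y + T ?r y)" by (simp only: tens_addL)
    also have "\<dots> = sig (T (rE z a) y) + sig (T ?r y)" by (rule sig_add[OF tens_TT tens_TT])
    also have "sig (T ?r y) = T y ?r" using Cons by auto
    also have "sig (T (rE z a) y) = T y (rE z a)"
      using sig_rT[OF tens_TT] tens_rE_L[OF y] tens_rE_R sigma_flip z y by metis
    finally show ?case using za by (simp add: tens_addR)
  qed
  obtain L where L: "\<forall>(z, a)\<in>set L. z \<in> Z" "x = sum_list (map (\<lambda>(z, a). rE z a) L)"
    using cent unfolding centered_def by blast
  show ?thesis using main[OF L(1)] L(2) by simp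
qed

lemma g_sym: "y \<in> Z \<Longrightarrow> g (T x y) = g (T y x)"
  using g_sig[OF tens_TT, of x y] sig_tens_Z by metis


lemma add_gTR: "additive (\<lambda>y. g (T u y))"
  by unfold_locales (simp only: tens_addR g_add tens_TT)
lemma add_gTL: "additive (\<lambda>x. g (T x y))"
  by unfold_locales (simp only: tens_addL g_add tens_TT)

lemma TT_sum: "finite A \<Longrightarrow> (\<And>a. a \<in> A \<Longrightarrow> f a \<in> TTs) \<Longrightarrow> sum f A \<in> TTs"
  by (induction A rule: finite_induct) (auto simp: TT_zero TT_add)

definition "G u v t = g (T v (gid lE n Phi phi g u t))"

lemma add_gid: "additive (gid lE n Phi phi g u)"
  by unfold_locales (simp add: gid_def lE_addR sum.distrib)

lemma add_G: "additive (G u v)"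
  unfolding G_def by unfold_locales (simp only: additive.add[OF add_gid] additive.add[OF add_gTR])

lemma G_expand: "v \<in> Z \<Longrightarrow> G u v t = (\<Sum>j<n. g (T u (Phi j)) * g (T v (t j)))"
  unfolding G_def gid_def by (simp add: additive.sum[OF add_gTR] g_tens_lE_R)

lemma gid_tens: "gid lE n Phi phi g u (T x y) = lE (g (T u x)) y"
proof -
  have "gid lE n Phi phi g u (T x y) = (\<Sum>j<n. lE (g (T u (Phi j)) * phi j x) y)"
    unfolding gid_def tens_def by (simp add: lE_mult)
  also have "\<dots> = lE (\<Sum>j<n. g (T u (Phi j)) * phi j x) y"
    by (rule additive.sum[OF add_lE_L, symmetric])
  also have "(\<Sum>j<n. g (T u (Phi j)) * phi j x) = (\<Sum>j<n. g (T u (rE (Phi j) (phi j x))))"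
    by (simp add: g_tens_rE_R)
  also have "\<dots> = g (T u (\<Sum>j<n. rE (Phi j) (phi j x)))"
    by (rule additive.sum[OF add_gTR, symmetric])
  also have "(\<Sum>j<n. rE (Phi j) (phi j x)) = x" using decomp by metis
  finally show ?thesis .
qed

lemma G_tens: "v \<in> Z \<Longrightarrow> G u v (T x y) = g (T u x) * g (T v y)"
  unfolding G_def gid_tens by (simp add: g_tens_lE_R)

abbreviation "SL R \<equiv> sum_list (map (\<lambda>(x, y). T x y) R)"

lemma G_SL: "G u v (SL R) = sum_list (map (\<lambda>(x, y). G u v (T x y)) R)"
  by (simp add: additive_sum_list[OF add_G] case_prod_unfold comp_def)

lemma gg01_G: "v \<in> Z \<Longrightarrow> gg01 lE n phi g R u v = G u v (SL R)"
  unfolding gg01_def G_SL by (simp add: G_tens case_prod_unfold)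

lemma gg10_G: "u \<in> Z \<Longrightarrow> v \<in> Z \<Longrightarrow> (\<forall>(x, y)\<in>set R. y \<in> Z) \<Longrightarrow> gg10 lE n phi g R u v = G v u (SL R)"
  unfolding gg10_def G_SL
  by (rule arg_cong[where f=sum_list], rule map_cong) (auto simp: G_tens g_central)

lemma SL_TT: "SL R \<in> TTs"
  by (rule TT_sum_list) (auto simp: tens_TT)

lemma sig_SL: "(\<forall>(x, y)\<in>set R. y \<in> Z) \<Longrightarrow> sig (SL R) = sum_list (map (\<lambda>(x, y). T y x) R)"
proof (induction R)
  case Nil
  show ?case by (simp only: list.map(1) sum_list.Nil sig_zero)
next
  case (Cons a R)
  obtain x y where a: "a = (x, y)" by fastforce
  have y: "y \<in> Z" using Cons.prems a by auto
  have "sig (T x y + SL R) = sig (T x y) + sig (SL R)" by (rule sig_add[OF tens_TT SL_TT])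
  also have "\<dots> = T y x + sum_list (map (\<lambda>(x, y). T y x) R)"
    using Cons sig_tens_Z[OF y] by auto
  finally show ?case unfolding a by (simp only: list.map(2) sum_list.Cons prod.case)
qed

lemma G_flip: "u \<in> Z \<Longrightarrow> v \<in> Z \<Longrightarrow> (\<forall>(x, y)\<in>set R. y \<in> Z) \<Longrightarrow>
    G u v (sum_list (map (\<lambda>(x, y). T y x) R)) = G v u (SL R)"
proof -
  assume u: "u \<in> Z" and v: "v \<in> Z" and R: "\<forall>(x, y)\<in>set R. y \<in> Z"
  have "G u v (sum_list (map (\<lambda>(x, y). T y x) R)) = sum_list (map (\<lambda>(x, y). G u v (T y x)) R)"
    by (simp add: additive_sum_list[OF add_G] case_prod_unfold comp_def)
  also have "\<dots> = sum_list (map (\<lambda>(x, y). G v u (T x y)) R)"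
    by (rule arg_cong[where f=sum_list], rule map_cong) (use R u v in \<open>auto simp: G_tens g_central\<close>)
  finally show ?thesis by (simp add: G_SL)
qed

lemma sig_diff: "s \<in> TTs \<Longrightarrow> t \<in> TTs \<Longrightarrow> sig (s - t) = sig s - sig t"
  using sig_add[OF TT_diff, of s t t] by (simp add: algebra_simps)

lemma G_sym: "u \<in> Z \<Longrightarrow> v \<in> Z \<Longrightarrow> (\<forall>(x, y)\<in>set R1. y \<in> Z) \<Longrightarrow> (\<forall>(x, y)\<in>set R2. y \<in> Z)
   \<Longrightarrow> wT (SL R1 - SL R2) = 0 \<Longrightarrow> G u v (SL R1 - SL R2) = G v u (SL R1 - SL R2)"
proof -
  assume u: "u \<in> Z" and v: "v \<in> Z" and R1: "\<forall>(x, y)\<in>set R1. y \<in> Z"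
    and R2: "\<forall>(x, y)\<in>set R2. y \<in> Z" and w: "wT (SL R1 - SL R2) = 0"
  have "G u v (SL R1 - SL R2) = G u v (sig (SL R1 - SL R2))"
    using sig_ker[OF TT_diff[OF SL_TT SL_TT] w] by simp
  also have "\<dots> = G u v (sig (SL R1)) - G u v (sig (SL R2))"
    by (simp add: sig_diff SL_TT additive.diff[OF add_G])
  also have "\<dots> = G v u (SL R1) - G v u (SL R2)"
    by (simp add: sig_SL R1 R2 G_flip u v)
  also have "\<dots> = G v u (SL R1 - SL R2)" by (simp add: additive.diff[OF add_G])
  finally show ?thesis .
qed

lemma compat_G:
  assumes comp: "compatible lE rE n p Phi phi d0 wedge F g nabla"
    and w: "w \<in> Z" and e: "e \<in> Z" and th: "\<theta> \<in> Z"
  shows "G e \<theta> (nabla w) + G w \<theta> (nabla e) = g (T \<theta> (d0 (g (T w e))))"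
proof -
  have c: "(\<Sum>j<n. gid lE n Phi phi g (Phi j) (sig (T (nabla w j) e))) + gid lE n Phi phi g w (nabla e)
        = d0 (g (T w e))" using comp w e unfolding compatible_def by blast
  have "g (T \<theta> (d0 (g (T w e)))) = (\<Sum>j<n. G (Phi j) \<theta> (sig (T (nabla w j) e))) + G w \<theta> (nabla e)"
    unfolding c[symmetric] G_def by (simp add: additive.add[OF add_gTR] additive.sum[OF add_gTR])
  also have "(\<Sum>j<n. G (Phi j) \<theta> (sig (T (nabla w j) e))) = (\<Sum>j<n. g (T e (Phi j)) * g (T \<theta> (nabla w j)))"
    by (simp add: sig_tens_Z e G_tens th g_sym)
  also have "\<dots> = G e \<theta> (nabla w)" by (simp add: G_expand th)
  finally show ?thesis by simp
qed


abbreviation "N0 \<equiv> nabla0 lE n Phi phi d0 d1 wedge F"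

lemma wT_N0: "wT (N0 x) = - d1 x"
proof -
  have "wT (inv_into F wT (wT (nablaGr lE n Phi phi d0 x) + d1 x)) = wT (nablaGr lE n Phi phi d0 x) + d1 x"
    by (rule bij_betw_inv_into_right[OF F_bij UNIV_I])
  then show ?thesis unfolding nabla0_def by (simp add: additive.diff[OF add_wT])
qed

lemma G_sym_conn:
  assumes tors: "torsionless n Phi d1 wedge nabla"
    and r1: "zrep lE rE n phi R1 (nabla x)" and r2: "zrep lE rE n phi R2 (N0 x)"
    and u: "u \<in> Z" and v: "v \<in> Z"
  shows "G u v (nabla x) - G v u (nabla x) = G u v (N0 x) - G v u (N0 x)"
proof -
  have e1: "nabla x = SL R1" and c1: "\<forall>(x, y)\<in>set R1. y \<in> Z" using r1 unfolding zrep_def by auto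
  have e2: "N0 x = SL R2" and c2: "\<forall>(x, y)\<in>set R2. y \<in> Z" using r2 unfolding zrep_def by auto
  have "wT (nabla x) = - d1 x" using tors unfolding torsionless_def by (simp add: eq_neg_iff_add_eq_0)
  then have "wT (SL R1 - SL R2) = 0" using wT_N0[of x] unfolding e1 e2 by (simp add: additive.diff[OF add_wT])
  then have "G u v (SL R1 - SL R2) = G v u (SL R1 - SL R2)" using G_sym[OF u v c1 c2] by blast
  then show ?thesis unfolding e1 e2 additive.diff[OF add_G] by (simp add: algebra_simps)
qed

lemma gg01_rep: "zrep lE rE n phi R t \<Longrightarrow> v \<in> Z \<Longrightarrow> gg01 lE n phi g R u v = G u v t"
  unfolding zrep_def using gg01_G by auto

lemma gg10_rep: "zrep lE rE n phi R t \<Longrightarrow> u \<in> Z \<Longrightarrow> v \<in> Z \<Longrightarrow> gg10 lE n phi g R u v = G v u t"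
  unfolding zrep_def using gg10_G by auto


lemma add_app: "additive (\<lambda>t::nat \<Rightarrow> 'e. t k)" by unfold_locales simp

lemma TT_expand: "t \<in> TTs \<Longrightarrow> t = (\<Sum>j<n. T (Phi j) (t j))"
proof (rule ext)
  fix k assume t: "t \<in> TTs"
  have "(\<Sum>j<n. T (Phi j) (t j)) k = (\<Sum>j<n. T (Phi j) (t j) k)"
    by (rule additive.sum[OF add_app])
  also have "\<dots> = t k"
  proof (cases "k < n")
    case True
    then show ?thesis using TT_D1[OF t True] by (simp add: tens_def phiPhi)
  next
    case False
    then show ?thesis using TT_D0[OF t False] by (simp add: tens_def)
  qed
  finally show "t k = (\<Sum>j<n. T (Phi j) (t j)) k" by simp
qed

lemma zrep_tens: "\<exists>R. zrep lE rE n phi R (T x e)"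
proof -
  obtain L where L: "\<forall>(z, a)\<in>set L. z \<in> Z" "e = sum_list (map (\<lambda>(z, a). rE z a) L)"
    using cent unfolding centered_def by blast
  have "T x e = sum_list (map (\<lambda>(z, a). T x (rE z a)) L)"
    unfolding L(2) by (simp add: additive_sum_list[OF add_tensR] case_prod_unfold comp_def)
  also have "\<dots> = sum_list (map (\<lambda>(z, a). T (rE x a) z) L)"
    by (rule arg_cong[where f=sum_list], rule map_cong) (use L(1) in \<open>auto simp: ZD[symmetric] tens_lE_R\<close>)
  also have "\<dots> = SL (map (\<lambda>(z, a). (rE x a, z)) L)"
    by (simp add: case_prod_unfold comp_def)
  finally show ?thesis unfolding zrep_def using L(1) by (intro exI[of _ "map (\<lambda>(z, a). (rE x a, z)) L"]) auto
qed

lemma zrep_sum: "finite A \<Longrightarrow> (\<And>a. a \<in> A \<Longrightarrow> \<exists>R. zrep lE rE n phi R (f a)) \<Longrightarrow> \<exists>R. zrep lE rE n phi R (sum f A)"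
proof (induction A rule: finite_induct)
  case empty
  show ?case unfolding zrep_def by (intro exI[of _ "[]"]) simp
next
  case (insert a A)
  obtain R1 where R1: "zrep lE rE n phi R1 (f a)" using insert by blast
  obtain R2 where R2: "zrep lE rE n phi R2 (sum f A)" using insert by blast
  have "zrep lE rE n phi (R1 @ R2) (sum f (insert a A))"
    using R1 R2 insert(1,2) unfolding zrep_def by auto
  then show ?case by blast
qed

lemma TT_zrep: "t \<in> TTs \<Longrightarrow> \<exists>R. zrep lE rE n phi R t"
  using zrep_sum[of "{..<n}" "\<lambda>j. T (Phi j) (t j)"] zrep_tens TT_expand by fastforce

end

theorem theorem5p5:
  fixes emb :: "complex \<Rightarrow> 'a::ring_1"
    and lE :: "'a \<Rightarrow> 'e::ab_group_add \<Rightarrow> 'e" and rE :: "'e \<Rightarrow> 'a \<Rightarrow> 'e"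
    and lW :: "'a \<Rightarrow> 'w::ab_group_add \<Rightarrow> 'w" and rW :: "'w \<Rightarrow> 'a \<Rightarrow> 'w"
    and d0 :: "'a \<Rightarrow> 'e" and d1 :: "'e \<Rightarrow> 'w" and wedge :: "'e \<Rightarrow> 'e \<Rightarrow> 'w"
    and n :: nat and p :: "nat \<Rightarrow> nat \<Rightarrow> 'a" and Phi :: "nat \<Rightarrow> 'e" and phi :: "nat \<Rightarrow> 'e \<Rightarrow> 'a"
    and F :: "(nat \<Rightarrow> 'e) set" and g :: "(nat \<Rightarrow> 'e) \<Rightarrow> 'a" and nabla :: "'e \<Rightarrow> (nat \<Rightarrow> 'e)"
    and \<omega> \<eta> \<theta> :: 'e
    and R\<eta> R0\<omega> R0\<eta> R0\<theta> :: "('e \<times> 'e) list"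
  assumes calc: "calculus emb lE rE lW rW d0 d1 wedge"
    and pres: "proj_pres rE n p Phi phi"
    and split: "splitting lE rE n p Phi wedge F"
    and cent: "centered lE rE"
    and sigma_flip: "\<forall>x\<in>ZE lE rE. \<forall>y\<in>ZE lE rE.
        sigma lE n p Phi wedge F (tens lE n phi x y) = tens lE n phi y x"
    and met: "metric lE rE n p Phi phi wedge F g"
    and conn: "connection emb lE rE n p phi d0 nabla"
    and tors: "torsionless n Phi d1 wedge nabla"
    and comp: "compatible lE rE n p Phi phi d0 wedge F g nabla"
    and Z: "\<omega> \<in> ZE lE rE" "\<eta> \<in> ZE lE rE" "\<theta> \<in> ZE lE rE"
    and rep: "zrep lE rE n phi R\<eta> (nabla \<eta>)"
      "zrep lE rE n phi R0\<omega> (nabla0 lE n Phi phi d0 d1 wedge F \<omega>)"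
      "zrep lE rE n phi R0\<eta> (nabla0 lE n Phi phi d0 d1 wedge F \<eta>)"
      "zrep lE rE n phi R0\<theta> (nabla0 lE n Phi phi d0 d1 wedge F \<theta>)"
  shows "2 * gg01 lE n phi g R\<eta> \<omega> \<theta> =
           g (tens lE n phi \<omega> (d0 (g (tens lE n phi \<eta> \<theta>))))
         - g (tens lE n phi \<eta> (d0 (g (tens lE n phi \<theta> \<omega>))))
         + g (tens lE n phi \<theta> (d0 (g (tens lE n phi \<omega> \<eta>))))
         - gg01 lE n phi g R0\<omega> \<eta> \<theta> + gg10 lE n phi g R0\<omega> \<eta> \<theta>
         + gg01 lE n phi g R0\<eta> \<omega> \<theta> - gg10 lE n phi g R0\<eta> \<omega> \<theta>
         - gg01 lE n phi g R0\<theta> \<eta> \<omega> + gg10 lE n phi g R0\<theta> \<eta> \<omega>"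
proof -
  interpret L: L5 emb lE rE lW rW d0 d1 wedge n p Phi phi F g
    using calc pres split cent sigma_flip met by (rule L5.intro)
  have nT: "nabla x \<in> TT lE n p" for x using conn unfolding connection_def by blast
  obtain R\<omega> where r\<omega>: "zrep lE rE n phi R\<omega> (nabla \<omega>)" using L.TT_zrep[OF nT] by blast
  obtain R\<theta> where r\<theta>: "zrep lE rE n phi R\<theta> (nabla \<theta>)" using L.TT_zrep[OF nT] by blast
  note c1 = L.compat_G[OF comp Z(2) Z(3) Z(1)]
  note c2 = L.compat_G[OF comp Z(3) Z(1) Z(2)]
  note c3 = L.compat_G[OF comp Z(1) Z(2) Z(3)]
  note s1 = L.G_sym_conn[OF tors r\<omega> rep(2) Z(2) Z(3)]
  note s2 = L.G_sym_conn[OF tors rep(1) rep(3) Z(1) Z(3)]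
  note s3 = L.G_sym_conn[OF tors r\<theta> rep(4) Z(2) Z(1)]
  have e: "gg01 lE n phi g R\<eta> \<omega> \<theta> = L.G \<omega> \<theta> (nabla \<eta>)"
    "gg01 lE n phi g R0\<omega> \<eta> \<theta> = L.G \<eta> \<theta> (L.N0 \<omega>)"
    "gg10 lE n phi g R0\<omega> \<eta> \<theta> = L.G \<theta> \<eta> (L.N0 \<omega>)"
    "gg01 lE n phi g R0\<eta> \<omega> \<theta> = L.G \<omega> \<theta> (L.N0 \<eta>)"
    "gg10 lE n phi g R0\<eta> \<omega> \<theta> = L.G \<theta> \<omega> (L.N0 \<eta>)"
    "gg01 lE n phi g R0\<theta> \<eta> \<omega> = L.G \<eta> \<omega> (L.N0 \<theta>)"
    "gg10 lE n phi g R0\<theta> \<eta> \<omega> = L.G \<omega> \<eta> (L.N0 \<theta>)"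
    using L.gg01_rep L.gg10_rep rep Z by auto
  have s1': "L.G \<eta> \<theta> (L.N0 \<omega>) = L.G \<eta> \<theta> (nabla \<omega>) - L.G \<theta> \<eta> (nabla \<omega>) + L.G \<theta> \<eta> (L.N0 \<omega>)"
    using s1 by (metis diff_add_cancel)
  have s2': "L.G \<omega> \<theta> (L.N0 \<eta>) = L.G \<omega> \<theta> (nabla \<eta>) - L.G \<theta> \<omega> (nabla \<eta>) + L.G \<theta> \<omega> (L.N0 \<eta>)"
    using s2 by (metis diff_add_cancel)
  have s3': "L.G \<eta> \<omega> (L.N0 \<theta>) = L.G \<eta> \<omega> (nabla \<theta>) - L.G \<omega> \<eta> (nabla \<theta>) + L.G \<omega> \<eta> (L.N0 \<theta>)"
    using s3 by (metis diff_add_cancel)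
  show ?thesis unfolding e c1[symmetric] c2[symmetric] c3[symmetric] mult_2 s1' s2' s3'
    by (simp add: algebra_simps)
qed

end
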